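(* Let $p$ and $q$ be distinct positive integers. Then for every integer $n\ge p$, the number of compositions of $n-p$ all of whose parts are equal to $p$ or $q$ equals the number of compositions of $n$ all of whose parts are of the form $p+qi$ with $i\in\mathbb N=\{0,1,2,\dots\}$.
   Context: A composition of an integer $n\ge 0$ is a finite sequence $(a_1,\dots,a_k)$ of positive integers (the parts) with sum $n$; the empty sequence is the unique composition of $0$. *)

theory Defs
  imports Main
begin

definition compositions_with_parts :: "nat set \<Rightarrow> nat \<Rightarrow> nat list set" where
  "compositions_with_parts S n =
     {xs. (\<forall>x\<in>set xs. 0 < x) \<and> sum_list xs = n \<and> set xs \<subseteq> S}"

end

theory Submission
  imports Defs
begin

fun E :: "nat \<Rightarrow> nat \<Rightarrow> nat list \<Rightarrow> nat list" where
  "E p q [] = []"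
| "E p q [i] = replicate i q"
| "E p q (i # j # r) = replicate i q @ p # E p q (j # r)"

primrec D :: "nat \<Rightarrow> nat list \<Rightarrow> nat list" where
  "D q [] = [0]"
| "D q (x # xs) = (if x = q then Suc (hd (D q xs)) # tl (D q xs) else 0 # D q xs)"

lemma D_ne: "D q xs \<noteq> []"
  by (cases xs) auto

lemma D_rep: "D q (replicate i q @ ys) = (hd (D q ys) + i) # tl (D q ys)"
  by (induction i) (auto simp: D_ne)

lemma D_E: "p \<noteq> q \<Longrightarrow> is \<noteq> [] \<Longrightarrow> D q (E p q is) = is"
proof (induction p q "is" rule: E.induct)
  case (2 p q i) then show ?case using D_rep[of q i "[]"] by simp
next
  case (3 p q i j r) then show ?case using D_rep[of q i "p # E p q (j # r)"] by simp
qed simp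

lemma E_Suc: "E p q (Suc k # r) = q # E p q (k # r)"
  by (cases r) auto

lemma E_D: "set xs \<subseteq> {p, q} \<Longrightarrow> E p q (D q xs) = xs"
proof (induction xs)
  case Nil then show ?case by simp
next
  case (Cons x xs)
  obtain k r where kr: "D q xs = k # r" using D_ne by (metis list.exhaust)
  show ?case
  proof (cases "x = q")
    case True then show ?thesis using Cons kr by (simp add: E_Suc)
  next
    case False then show ?thesis using Cons kr by simp
  qed
qed

lemma E_sum: "is \<noteq> [] \<Longrightarrow> sum_list (E p q is) + p = sum_list (map (\<lambda>i. p + q * i) is)"
  by (induction p q "is" rule: E.induct) (auto simp: sum_list_replicate)

lemma E_set: "set (E p q is) \<subseteq> {p, q}"
  by (induction p q "is" rule: E.induct) auto

theorem proposition5: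
  fixes p q n :: nat
  assumes "0 < p" and "0 < q" and "p \<noteq> q" and "p \<le> n"
  shows "card (compositions_with_parts {p, q} (n - p)) =
         card (compositions_with_parts {p + q * i | i. True} n)"
proof -
  define S where "S = {is. sum_list (map (\<lambda>i. p + q * i) is) = n}"
  have Sne: "is \<noteq> []" if "is \<in> S" for "is" using that assms unfolding S_def by auto
  have b1: "bij_betw (E p q) S (compositions_with_parts {p, q} (n - p))"
  proof (rule bij_betw_byWitness[where f'="D q"])
    show "\<forall>a\<in>S. D q (E p q a) = a" using D_E Sne assms(3) by blast
    show "\<forall>a'\<in>compositions_with_parts {p, q} (n - p). E p q (D q a') = a'"
      using E_D unfolding compositions_with_parts_def by blast
    show "E p q ` S \<subseteq> compositions_with_parts {p, q} (n - p)"
    proof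
      fix ys assume "ys \<in> E p q ` S"
      then obtain "is" where i: "is \<in> S" "ys = E p q is" by blast
      have "sum_list ys + p = n" using E_sum[of "is" p q] Sne[OF i(1)] i unfolding S_def by simp
      then show "ys \<in> compositions_with_parts {p, q} (n - p)"
        using E_set[of p q "is"] i assms unfolding compositions_with_parts_def by fastforce
    qed
    show "D q ` compositions_with_parts {p, q} (n - p) \<subseteq> S"
    proof
      fix is0 assume "is0 \<in> D q ` compositions_with_parts {p, q} (n - p)"
      then obtain xs where x: "xs \<in> compositions_with_parts {p, q} (n - p)" "is0 = D q xs" by blast
      have st: "set xs \<subseteq> {p, q}" "sum_list xs = n - p" using x unfolding compositions_with_parts_def by auto
      have "E p q is0 = xs" using E_D[OF st(1)] x by simp
      then have "sum_list xs + p = sum_list (map (\<lambda>i. p + q * i) is0)"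
        using E_sum[of is0 p q] x D_ne by auto
      then show "is0 \<in> S" using st assms unfolding S_def by simp
    qed
  qed
  have b2: "bij_betw (map (\<lambda>i. p + q * i)) S (compositions_with_parts {p + q * i | i. True} n)"
  proof (rule bij_betw_byWitness[where f'="map (\<lambda>x. (x - p) div q)"])
    show "\<forall>a\<in>S. map (\<lambda>x. (x - p) div q) (map (\<lambda>i. p + q * i) a) = a"
      using assms(2) by (simp add: map_idI)
    show "\<forall>a'\<in>compositions_with_parts {p + q * i | i. True} n.
            map (\<lambda>i. p + q * i) (map (\<lambda>x. (x - p) div q) a') = a'"
      unfolding compositions_with_parts_def using assms(2) by (auto intro!: map_idI)
    show "map (\<lambda>i. p + q * i) ` S \<subseteq> compositions_with_parts {p + q * i | i. True} n"
      unfolding S_def compositions_with_parts_def using assms(1) by auto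
    show "map (\<lambda>x. (x - p) div q) ` compositions_with_parts {p + q * i | i. True} n \<subseteq> S"
    proof
      fix is0 assume "is0 \<in> map (\<lambda>x. (x - p) div q) ` compositions_with_parts {p + q * i | i. True} n"
      then obtain xs where x: "xs \<in> compositions_with_parts {p + q * i | i. True} n"
        "is0 = map (\<lambda>x. (x - p) div q) xs" by blast
      have "map (\<lambda>i. p + q * i) is0 = xs"
        using x assms(2) unfolding compositions_with_parts_def by (auto intro!: map_idI)
      then show "is0 \<in> S" using x unfolding S_def compositions_with_parts_def by auto
    qed
  qed
  show ?thesis using bij_betw_same_card[OF b1] bij_betw_same_card[OF b2] by simp
qed

end
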